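(* Let $\mathbf{x}:M\to\mathbb{R}^4_1$ be a complete, algebraic stationary surface, and let $z$ be a local complex coordinate on (the oriented double cover of) $M$ centered at a good singular end $z=0$ with multiplicity $\widetilde d=1$ and index $\mathrm{ind}=m\ge 1$, whose flux vector is zero (i.e. $\mathbf{x}_z\,\mathrm{d}z$ has zero residue at $z=0$). Then the vector-valued meromorphic function $\mathbf{x}_z$ has a Laurent expansion around $z=0$ of the form $$\mathbf{x}_z=\Big(\sum_{k=1}^m\frac{\alpha_{k+2}}{z^{k+2}}\Big)\mathbf{v}_0+\frac{1}{z^2}\mathbf{v}_1+O(1),$$ where $\alpha_{k+2}\in\mathbb{C}$ with $\alpha_{m+2}\neq 0$, $\mathbf{v}_0\in\mathbb{R}^4_1$ is a nonzero lightlike vector, $\mathbf{v}_1\in\mathbb{C}^4_1$ is an isotropic vector, and $\mathbf{v}_0,\mathrm{Re}(\mathbf{v}_1),\mathrm{Im}(\mathbf{v}_1)$ span a degenerate $3$-dimensional subspace of $\mathbb{R}^4_1$.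
   Context: $\mathbb{R}^4_1$ is $\mathbb{R}^4$ with the Lorentz inner product $\langle \mathbf{x},\mathbf{x}\rangle=x_1^2+x_2^2+x_3^2-x_4^2$, extended complex-bilinearly to $\mathbb{C}^4_1=\mathbb{C}^4$; a vector $\mathbf{v}\in\mathbb{C}^4_1$ is isotropic if $\langle\mathbf{v},\mathbf{v}\rangle=0$, and a real vector is lightlike if it is nonzero with $\langle\mathbf{v},\mathbf{v}\rangle=0$. A stationary surface is a spacelike immersed surface with zero mean curvature; locally $\mathbf{x}=2\,\mathrm{Re}\int(\phi+\psi,\,-\mathrm{i}(\phi-\psi),\,1-\phi\psi,\,1+\phi\psi)\,\mathrm{d}h$ with meromorphic Gauss maps $\phi,\psi$ and holomorphic $1$-form $\mathrm{d}h$, so $\mathbf{x}_z\,\mathrm{d}z=(\phi+\psi,-\mathrm{i}(\phi-\psi),1-\phi\psi,1+\phi\psi)\,\mathrm{d}h$. Algebraic means $\mathbf{x}_z\,\mathrm{d}z$ extends meromorphically to a compact Riemann surface from which finitely many punctures (the ends) are removed. An end $p$ is singular if $\phi(p)=\overline{\psi(p)}$; if $\phi$ and $\psi$ take this common value (conjugated for $\psi$) with multiplicities $m'$ and $n'$ at $p$, the end is good when $m'\ne n'$, and its index is $\mathrm{ind}_p=m'$ if $m'<n'$ and $\mathrm{ind}_p=-n'$ if $m'>n'$ (for a regular end, $\mathrm{ind}_p=0$); $\mathrm{ind}^+_p=|\mathrm{ind}_p|$. The multiplicity of the end is $\widetilde d=d-\mathrm{ind}^+_p$, where $d+1$ is the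 order of the pole of $\mathbf{x}_z\,\mathrm{d}z$ at $p$. *)

theory Defs
  imports "HOL-Complex_Analysis.Complex_Analysis" "HOL-Library.Extended_Nat"
begin

definition lor :: "complex^4 \<Rightarrow> complex^4 \<Rightarrow> complex" where
  "lor x y = x$1*y$1 + x$2*y$2 + x$3*y$3 - x$4*y$4"

definition lor_r :: "real^4 \<Rightarrow> real^4 \<Rightarrow> real" where
  "lor_r x y = x$1*y$1 + x$2*y$2 + x$3*y$3 - x$4*y$4"

definition isotropic :: "complex^4 \<Rightarrow> bool" where
  "isotropic v \<longleftrightarrow> lor v v = 0"

definition lightlike :: "real^4 \<Rightarrow> bool" where
  "lightlike v \<longleftrightarrow> v \<noteq> 0 \<and> lor_r v v = 0"

definition cvec :: "real^4 \<Rightarrow> complex^4" where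
  "cvec v = (\<chi> i. complex_of_real (v$i))"

definition Re_vec :: "complex^4 \<Rightarrow> real^4" where
  "Re_vec v = (\<chi> i. Re (v$i))"

definition Im_vec :: "complex^4 \<Rightarrow> real^4" where
  "Im_vec v = (\<chi> i. Im (v$i))"

definition degenerate_subspace :: "(real^4) set \<Rightarrow> bool" where
  "degenerate_subspace W \<longleftrightarrow> (\<exists>w\<in>W. w \<noteq> 0 \<and> (\<forall>u\<in>W. lor_r w u = 0))"

text \<open>x_z determined by the Weierstrass data phi, psi and dh = h dz.\<close>
definition xz :: "(complex \<Rightarrow> complex) \<Rightarrow> (complex \<Rightarrow> complex) \<Rightarrow> (complex \<Rightarrow> complex)
                   \<Rightarrow> complex \<Rightarrow> complex^4" where
  "xz \<phi> \<psi> h z = (\<chi> i. h z * (if i = 1 then \<phi> z + \<psi> z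
                          else if i = 2 then - \<i> * (\<phi> z - \<psi> z)
                          else if i = 3 then 1 - \<phi> z * \<psi> z
                          else 1 + \<phi> z * \<psi> z))"

definition value_mult :: "(complex \<Rightarrow> complex) \<Rightarrow> complex \<Rightarrow> enat" where
  "value_mult f c = (if (\<forall>\<^sub>F z in at 0. f z = c) then \<infinity>
                     else enat (nat (zorder (\<lambda>z. f z - c) 0)))"

definition pole_mult :: "(complex \<Rightarrow> complex) \<Rightarrow> enat" where
  "pole_mult f = enat (nat (- zorder f 0))"

text \<open>The end z = 0 is singular (phi(0) = conj(psi(0)) in the extended complex plane), and
  m', n' are the multiplicities with which phi, psi take this common value
  (conjugated for psi).\<close>
definition singular_end_mults :: "(complex \<Rightarrow> complex) \<Rightarrow> (complex \<Rightarrow> complex) \<Rightarrow> enat \<Rightarrow> enat \<Rightarrow> bool" where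
  "singular_end_mults \<phi> \<psi> m' n' \<longleftrightarrow>
     (is_pole \<phi> 0 \<and> is_pole \<psi> 0 \<and> m' = pole_mult \<phi> \<and> n' = pole_mult \<psi>) \<or>
     (\<exists>c. (\<phi> \<longlongrightarrow> c) (at 0) \<and> (\<psi> \<longlongrightarrow> cnj c) (at 0) \<and>
          m' = value_mult \<phi> c \<and> n' = value_mult \<psi> (cnj c))"

definition end_index :: "enat \<Rightarrow> enat \<Rightarrow> int" where
  "end_index m' n' = (if m' < n' then int (the_enat m') else - int (the_enat n'))"

definition vpole_order :: "(complex \<Rightarrow> complex^4) \<Rightarrow> nat \<Rightarrow> bool" where
  "vpole_order F n \<longleftrightarrow> (\<exists>L. L \<noteq> 0 \<and> ((\<lambda>z. (z ^ n) *s F z) \<longlongrightarrow> L) (at 0))"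

end

theory Submission
  imports Defs
begin


lemma taylor_rem:
  fixes F :: "complex \<Rightarrow> complex"
  assumes "F holomorphic_on ball 0 r"
  shows "\<exists>c R. R holomorphic_on ball 0 r \<and> (\<forall>z\<in>ball 0 r. F z = (\<Sum>j<N. c j * z^j) + z^N * R z)"
proof (induction N)
  case 0
  then show ?case using assms by auto
next
  case (Suc N)
  then obtain c R where R: "R holomorphic_on ball 0 r" and eq: "\<forall>z\<in>ball 0 r. F z = (\<Sum>j<N. c j * z^j) + z^N * R z"
    by blast
  define R' where "R' = (\<lambda>z. if z = 0 then deriv R 0 else (R z - R 0) / (z - 0))"
  show ?case
  proof (cases "r > 0")
    case False
    then have e: "ball (0::complex) r = {}" by auto
    show ?thesis
    proof (intro exI conjI)
      show "R holomorphic_on ball 0 r" by (rule R)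
    qed (simp add: e)
  next
    case True
    have hR': "R' holomorphic_on ball 0 r" unfolding R'_def
      by (rule pole_lemma[OF R]) (use True in auto)
    have RR: "R z = R 0 + z * R' z" for z
      by (auto simp: R'_def field_simps)
    show ?thesis
    proof (intro exI conjI ballI)
      show "R' holomorphic_on ball 0 r" by (rule hR')
      fix z :: complex assume z: "z \<in> ball 0 r"
      have "F z = (\<Sum>j<N. c j * z^j) + z^N * R z" using eq z by blast
      also have "\<dots> = (\<Sum>j<N. c j * z^j) + z^N * (R 0 + z * R' z)" by (simp only: RR[of z])
      also have "(\<Sum>j<N. c j * z^j) = (\<Sum>j<N. (c(N := R 0)) j * z^j)" by (rule sum.cong) auto
      also have "(\<Sum>j<N. (c(N := R 0)) j * z^j) + z^N * (R 0 + z * R' z) = (\<Sum>j<Suc N. (c(N := R 0)) j * z^j) + z^Suc N * R' z"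
        by (simp add: algebra_simps)
      finally show "F z = (\<Sum>j<Suc N. (c(N := R 0)) j * z^j) + z^Suc N * R' z" .
    qed
  qed
qed

lemma deriv_const_iter: "(deriv ^^ Suc n) (\<lambda>_. c) = (\<lambda>_::complex. 0::complex)"
proof (induction n)
  case 0 then show ?case by (simp add: deriv_const)
next
  case (Suc n) then show ?case by (simp add: deriv_const)
qed

lemma residue_pow:
  assumes "k \<ge> 2"
  shows "residue (\<lambda>z. b / z ^ k) 0 = 0"
proof -
  obtain n where k: "k = Suc (Suc n)" using assms by (metis add_2_eq_Suc le_Suc_ex)
  have "residue (\<lambda>z. (\<lambda>_. b) z / z ^ Suc (Suc n)) 0 = (deriv ^^ Suc n) (\<lambda>_. b) 0 / fact (Suc n)"
    by (rule residue_holomorphic_over_power'[of UNIV]) auto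
  then show ?thesis using k by (simp add: deriv_const_iter)
qed

lemma residue_sum_pow:
  assumes "finite S" "\<forall>j\<in>S. e j \<ge> 2"
  shows "residue (\<lambda>z. \<Sum>j\<in>S. b j / z ^ e j) 0 = 0"
  using assms
proof (induction S rule: finite_induct)
  case empty
  then show ?case by (simp add: residue_const)
next
  case (insert x F)
  have "residue (\<lambda>z. b x / z ^ e x + (\<Sum>j\<in>F. b j / z ^ e j)) 0
     = residue (\<lambda>z. b x / z ^ e x) 0 + residue (\<lambda>z. \<Sum>j\<in>F. b j / z ^ e j) 0"
    by (rule residue_add[of UNIV]) (auto intro!: holomorphic_intros)
  then show ?case using insert by (simp add: residue_pow)
qed

lemma residue_laurent:
  fixes R f :: "complex \<Rightarrow> complex"
  assumes "r > 0" "R holomorphic_on ball 0 r" "finite S" "\<forall>j\<in>S. e j \<ge> 2"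
    and eq: "\<forall>z\<in>ball 0 r - {0}. f z = (\<Sum>j\<in>S. b j / z ^ e j) + a / z + R z"
  shows "residue f 0 = a"
proof -
  have "residue f 0 = residue (\<lambda>z. (\<Sum>j\<in>S. b j / z ^ e j) + a / z + R z) 0"
  proof (rule residue_cong)
    show "\<forall>\<^sub>F z in at 0. f z = (\<Sum>j\<in>S. b j / z ^ e j) + a / z + R z"
      unfolding eventually_at using assms(1) eq by (intro exI[of _ r]) (auto simp: dist_norm)
  qed simp
  also have "\<dots> = residue (\<lambda>z. (\<Sum>j\<in>S. b j / z ^ e j) + a / z) 0 + residue R 0"
    by (rule residue_add[of "ball 0 r"]) (use assms in \<open>auto intro!: holomorphic_intros holomorphic_on_subset[OF assms(2)]\<close>)
  also have "residue (\<lambda>z. (\<Sum>j\<in>S. b j / z ^ e j) + a / z) 0 =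
     residue (\<lambda>z. (\<Sum>j\<in>S. b j / z ^ e j)) 0 + residue (\<lambda>z. a / z) 0"
    by (rule residue_add[of UNIV]) (auto intro!: holomorphic_intros)
  also have "residue (\<lambda>z. a / z) 0 = a"
    using residue_simple[of UNIV 0 "\<lambda>_. a"] by simp
  also have "residue R 0 = 0"
    by (rule residue_holo[OF _ _ assms(2)]) (use assms in auto)
  finally show ?thesis using residue_sum_pow[OF assms(3,4)] by simp
qed




lemma reindex_poles:
  fixes c :: "nat \<Rightarrow> complex" and z :: complex
  shows "(\<Sum>k=1..m. c (m + 2 - (k + 2)) / z ^ (k + 2)) = (\<Sum>j<m. c j / z ^ (m + 2 - j))"
proof (rule sum.reindex_bij_witness[of _ "\<lambda>k. m - k" "\<lambda>j. m - j"])
qed (auto simp: Suc_diff_Suc)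

lemma cont_bounded_near0:
  fixes R :: "complex \<Rightarrow> 'a::real_normed_vector"
  assumes "r > 0" "continuous_on (ball 0 r) R"
  shows "\<exists>B. \<forall>z\<in>cball 0 (r/2). norm (R z) \<le> B"
proof -
  have "continuous_on (cball 0 (r/2)) R"
    by (rule continuous_on_subset[OF assms(2)]) (use assms in auto)
  then have "compact (R ` cball 0 (r/2))" by (rule compact_continuous_image) simp
  then have "bounded (R ` cball 0 (r/2))" by (rule compact_imp_bounded)
  then show ?thesis by (auto simp: bounded_iff)
qed




lemma core:
  fixes X :: "complex \<Rightarrow> complex^4" and H0 F G :: "complex \<Rightarrow> complex"
    and u0 u1 u2 e L :: "complex^4" and p3 p4 :: complex
  assumes r: "r > 0"
    and H0hol: "H0 holomorphic_on ball 0 r - {0}"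
    and Fh: "F holomorphic_on ball 0 r" and Gh: "G holomorphic_on ball 0 r" and F0: "F 0 \<noteq> 0"
    and m: "m \<ge> 1"
    and Xeq: "\<forall>z\<in>ball 0 r - {0}. \<forall>i. X z $ i = H0 z * u0$i + H0 z * (z^m * F z) * u1$i
               + H0 z * (z^(m+1) * G z) * u2$i + H0 z * (z^m * F z) * (z^(m+1) * G z) * e$i"
    and Hfun: "\<forall>z\<in>ball 0 r - {0}. H0 z = p3 * X z $ 3 + p4 * X z $ 4"
    and lim: "((\<lambda>z. z^(m+2) *s X z) \<longlongrightarrow> L) (at 0)" and L: "L \<noteq> 0"
    and flux: "\<forall>i. residue (\<lambda>z. X z $ i) 0 = 0"
    and indep: "\<forall>a b c. a *s u0 + b *s u1 + c *s u2 = 0 \<longrightarrow> a = 0 \<and> b = 0 \<and> c = 0"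
  shows "\<exists>\<alpha> a \<beta>. \<alpha> (m+2) \<noteq> 0 \<and> \<beta> \<noteq> 0 \<and> (\<exists>B. \<forall>\<^sub>F z in at 0.
           norm (X z - (\<Sum>k=1..m. \<alpha> (k + 2) / z ^ (k + 2)) *s u0 - (1 / z ^ 2) *s (a *s u0 + \<beta> *s u1)) \<le> B)"
proof -
  have ev: "\<forall>\<^sub>F z in at 0. z \<in> ball 0 r - {0}"
    unfolding eventually_at using r by (intro exI[of _ r]) (auto simp: dist_commute)
  define A where "A = p3 * L$3 + p4 * L$4"
  have limH: "((\<lambda>z. z^(m+2) * H0 z) \<longlongrightarrow> A) (at 0)"
  proof -
    have "((\<lambda>z. p3 * (z^(m+2) *s X z)$3 + p4 * (z^(m+2) *s X z)$4) \<longlongrightarrow> A) (at 0)"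
      unfolding A_def by (intro tendsto_intros lim)
    moreover have "\<forall>\<^sub>F z in at 0. p3 * (z^(m+2) *s X z)$3 + p4 * (z^(m+2) *s X z)$4 = z^(m+2) * H0 z"
      using ev by eventually_elim (use Hfun in \<open>auto simp: algebra_simps\<close>)
    ultimately show ?thesis by (rule Lim_transform_eventually)
  qed
  define Hh where "Hh = (\<lambda>z. if z = 0 then A else z^(m+2) * H0 z)"
  have Hhh: "Hh holomorphic_on ball 0 r"
    unfolding Hh_def
    by (rule removable_singularity[OF _ _ limH]) (auto intro!: holomorphic_intros H0hol)
  have H0eq: "H0 z = Hh z / z^(m+2)" if "z \<in> ball 0 r - {0}" for z
    using that by (auto simp: Hh_def)
  have Hh0: "Hh 0 = A" by (simp add: Hh_def)
  define Q where "Q = (\<lambda>i z. Hh z * (u0$i + z^m * F z * u1$i + z^(m+1) * G z * u2$i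
                                     + z^(2*m+1) * F z * G z * e$i))"
  have Qh: "Q i holomorphic_on ball 0 r" for i
    unfolding Q_def by (intro holomorphic_intros Hhh Fh Gh)
  have LA: "L$i = A * u0$i" for i
  proof -
    have "continuous_on (ball 0 r) (Q i)" by (rule holomorphic_on_imp_continuous_on[OF Qh])
    then have "isCont (Q i) 0" using r by (simp add: continuous_on_eq_continuous_at)
    then have "(Q i \<longlongrightarrow> Q i 0) (at 0)" by (simp add: isCont_def)
    moreover have "\<forall>\<^sub>F z in at 0. Q i z = (z^(m+2) *s X z)$i"
      using ev
    proof eventually_elim
      case (elim z)
      then have z0: "z \<noteq> 0" by auto
      have pp: "z^m * z^m = z^(m*2)" by (simp add: power_add[symmetric] mult_2_right)
      have "(z^(m+2) *s X z)$i = z^(m+2) * (H0 z * u0$i + H0 z * (z^m * F z) * u1$i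
               + H0 z * (z^(m+1) * G z) * u2$i + H0 z * (z^m * F z) * (z^(m+1) * G z) * e$i)"
        using Xeq elim by simp
      also have "z^(m+2) * (H0 z * u0$i + H0 z * (z^m * F z) * u1$i
               + H0 z * (z^(m+1) * G z) * u2$i + H0 z * (z^m * F z) * (z^(m+1) * G z) * e$i) = Q i z"
        unfolding Q_def Hh_def using z0 pp by (simp add: algebra_simps power_add mult_2)
      finally show ?case by simp
    qed
    ultimately have "((\<lambda>z. (z^(m+2) *s X z)$i) \<longlongrightarrow> Q i 0) (at 0)"
      by (rule Lim_transform_eventually)
    moreover have "((\<lambda>z. (z^(m+2) *s X z)$i) \<longlongrightarrow> L$i) (at 0)"
      by (intro tendsto_intros lim)
    ultimately have "L$i = Q i 0" using tendsto_unique[OF trivial_limit_at] by metis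
    then show ?thesis using Hh0 m by (simp add: Q_def)
  qed
  have A0: "A \<noteq> 0"
  proof
    assume "A = 0"
    then have "L = 0" using LA by (simp add: vec_eq_iff)
    then show False using L by simp
  qed

  obtain c R1 where R1: "R1 holomorphic_on ball 0 r"
    and c: "\<forall>z\<in>ball 0 r. Hh z = (\<Sum>j<m+2. c j * z^j) + z^(m+2) * R1 z"
    using taylor_rem[OF Hhh] by blast
  obtain d R2 where R2: "R2 holomorphic_on ball 0 r"
    and d: "\<forall>z\<in>ball 0 r. Hh z * F z = (\<Sum>j<2. d j * z^j) + z^2 * R2 z"
    using taylor_rem[of "\<lambda>z. Hh z * F z", OF holomorphic_on_mult[OF Hhh Fh]] by blast
  obtain g R3 where R3: "R3 holomorphic_on ball 0 r"
    and g: "\<forall>z\<in>ball 0 r. Hh z * G z = (\<Sum>j<1. g j * z^j) + z^1 * R3 z"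
    using taylor_rem[of "\<lambda>z. Hh z * G z", OF holomorphic_on_mult[OF Hhh Gh]] by blast
  define R4 where "R4 = (\<lambda>z. Hh z * F z * G z * z^(m-1))"
  have R4: "R4 holomorphic_on ball 0 r"
    unfolding R4_def by (intro holomorphic_intros Hhh Fh Gh)
  have c0: "c 0 = A" using c[rule_format, of 0] r Hh0 m by simp
  have d0: "d 0 = A * F 0" using d[rule_format, of 0] r Hh0 by (simp add: numeral_2_eq_2)
  define S where "S = (\<lambda>z. \<Sum>j<m. c j / z ^ (m + 2 - j))"
  have dec1: "H0 z = S z + c m / z^2 + c (m+1) / z + R1 z" if z: "z \<in> ball 0 r - {0}" for z
  proof -
    have z0: "z \<noteq> 0" using z by auto
    have "H0 z = Hh z / z^(m+2)" using H0eq z by simp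
    also have "\<dots> = ((\<Sum>j<m. c j * z^j) + c m * z^m + c (m+1) * z^(m+1) + z^(m+2) * R1 z) / z^(m+2)"
      using c z by simp
    also have "\<dots> = (\<Sum>j<m. c j * z^j / z^(m+2)) + c m / z^2 + c (m+1) / z + R1 z"
      using z0 by (simp add: add_divide_distrib sum_divide_distrib power_add power2_eq_square)
    also have "(\<Sum>j<m. c j * z^j / z^(m+2)) = S z"
      unfolding S_def
    proof (rule sum.cong)
      fix j assume "j \<in> {..<m}"
      then have "z^(m+2) = z^j * z^(m+2-j)" by (simp add: power_add[symmetric])
      then show "c j * z^j / z^(m+2) = c j / z^(m+2-j)" using z0 by simp
    qed simp
    finally show ?thesis .
  qed
  have dec2: "H0 z * (z^m * F z) = d 0 / z^2 + d 1 / z + R2 z" if z: "z \<in> ball 0 r - {0}" for z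
  proof -
    have z0: "z \<noteq> 0" using z by auto
    have "H0 z * (z^m * F z) = (Hh z * F z) / z^2" using H0eq[OF z] z0 by (simp add: power_add power2_eq_square)
    also have "\<dots> = (d 0 + d 1 * z + z^2 * R2 z) / z^2" using d z by (simp add: numeral_2_eq_2)
    also have "\<dots> = d 0 / z^2 + d 1 / z + R2 z" using z0 by (simp add: field_simps power2_eq_square)
    finally show ?thesis .
  qed
  have dec3: "H0 z * (z^(m+1) * G z) = g 0 / z + R3 z" if z: "z \<in> ball 0 r - {0}" for z
  proof -
    have z0: "z \<noteq> 0" using z by auto
    have "H0 z * (z^(m+1) * G z) = (Hh z * G z) / z" using H0eq[OF z] z0 by (simp add: power_add power2_eq_square)
    also have "\<dots> = (g 0 + z * R3 z) / z" using g z by simp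
    also have "\<dots> = g 0 / z + R3 z" using z0 by (simp add: field_simps)
    finally show ?thesis .
  qed
  have dec4: "H0 z * (z^m * F z) * (z^(m+1) * G z) = R4 z" if z: "z \<in> ball 0 r - {0}" for z
  proof -
    have z0: "z \<noteq> 0" using z by auto
    have "z^m = z * z^(m-1)" using m by (metis Suc_diff_le diff_Suc_1 power_Suc)
    then have "z^m * z^(m+1) = z^(m+2) * z^(m-1)" by (simp add: algebra_simps)
    then show ?thesis using H0eq[OF z] z0 unfolding R4_def by (simp add: field_simps)
  qed
  define Rv where "Rv = (\<lambda>i z. R1 z * u0$i + R2 z * u1$i + R3 z * u2$i + R4 z * e$i)"
  have Rvh: "Rv i holomorphic_on ball 0 r" for i
    unfolding Rv_def by (intro holomorphic_intros R1 R2 R3 R4)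
  have decX: "X z $ i = S z * u0$i + (c m * u0$i + d 0 * u1$i) / z^2
        + (c (m+1) * u0$i + d 1 * u1$i + g 0 * u2$i) / z + Rv i z"
    if z: "z \<in> ball 0 r - {0}" for z i
  proof -
    have z0: "z \<noteq> 0" using z by auto
    have "X z $ i = H0 z * u0$i + (H0 z * (z^m * F z)) * u1$i
               + (H0 z * (z^(m+1) * G z)) * u2$i + (H0 z * (z^m * F z) * (z^(m+1) * G z)) * e$i"
      using Xeq z by simp
    also have "\<dots> = H0 z * u0$i + (d 0 / z^2 + d 1 / z + R2 z) * u1$i
               + (g 0 / z + R3 z) * u2$i + R4 z * e$i"
      unfolding dec4[OF z] unfolding dec2[OF z] dec3[OF z] ..
    also have "\<dots> = (S z + c m / z^2 + c (m+1) / z + R1 z) * u0$i + (d 0 / z^2 + d 1 / z + R2 z) * u1$i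
               + (g 0 / z + R3 z) * u2$i + R4 z * e$i"
      unfolding dec1[OF z] ..
    also have "\<dots> = S z * u0$i + (c m * u0$i + d 0 * u1$i) / z^2
        + (c (m+1) * u0$i + d 1 * u1$i + g 0 * u2$i) / z + Rv i z"
      unfolding Rv_def using z0 by (simp add: field_simps)
    finally show ?thesis .
  qed
  have res0: "c (m+1) * u0$i + d 1 * u1$i + g 0 * u2$i = 0" for i
  proof -
    define b where "b = (\<lambda>j. if j = m then c m * u0$i + d 0 * u1$i else c j * u0$i)"
    have "residue (\<lambda>z. X z $ i) 0 = c (m+1) * u0$i + d 1 * u1$i + g 0 * u2$i"
    proof (rule residue_laurent[OF r Rvh, of "{..<Suc m}" "\<lambda>j. m + 2 - j" _ b])
      show "\<forall>z\<in>ball 0 r - {0}. X z $ i = (\<Sum>j\<in>{..<Suc m}. b j / z ^ (m + 2 - j))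
          + (c (m+1) * u0$i + d 1 * u1$i + g 0 * u2$i) / z + Rv i z"
      proof
        fix z :: complex assume z: "z \<in> ball 0 r - {0}"
        have "(\<Sum>j\<in>{..<Suc m}. b j / z ^ (m + 2 - j)) = (\<Sum>j<m. b j / z ^ (m + 2 - j)) + b m / z^2"
          by simp
        also have "(\<Sum>j<m. b j / z ^ (m + 2 - j)) = S z * u0$i"
          unfolding S_def sum_distrib_right by (rule sum.cong) (auto simp: b_def)
        finally show "X z $ i = (\<Sum>j\<in>{..<Suc m}. b j / z ^ (m + 2 - j))
          + (c (m+1) * u0$i + d 1 * u1$i + g 0 * u2$i) / z + Rv i z"
          using decX[OF z, of i] by (simp add: b_def)
      qed
    qed auto
    then show ?thesis using flux by simp
  qed
  have "c (m+1) *s u0 + d 1 *s u1 + g 0 *s u2 = 0"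
    using res0 by (simp add: vec_eq_iff)
  then have cz: "c (m+1) = 0" "d 1 = 0" "g 0 = 0" using indep by blast+
  define \<alpha> where "\<alpha> = (\<lambda>t. c (m + 2 - t))"
  have Rvc: "continuous_on (ball 0 r) (\<lambda>z. \<chi> i. Rv i z)"
    by (intro continuous_intros holomorphic_on_imp_continuous_on Rvh)
  obtain B where B: "\<forall>z\<in>cball 0 (r/2). norm (\<chi> i. Rv i z) \<le> B"
    using cont_bounded_near0[OF r Rvc] by blast
  show ?thesis
  proof (intro exI conjI)
    show "\<alpha> (m+2) \<noteq> 0" using c0 A0 by (simp add: \<alpha>_def)
    show "d 0 \<noteq> 0" using d0 A0 F0 by simp
    have bnd: "norm (X z - (\<Sum>k=1..m. \<alpha> (k + 2) / z ^ (k + 2)) *s u0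
            - (1 / z ^ 2) *s (c m *s u0 + d 0 *s u1)) \<le> B" if z: "z \<noteq> 0 \<and> dist z 0 < r/2" for z
    proof -
      have zb: "z \<in> ball 0 r - {0}" using r z by (auto simp: dist_norm)
      have "X z - (\<Sum>k=1..m. \<alpha> (k + 2) / z ^ (k + 2)) *s u0 - (1 / z ^ 2) *s (c m *s u0 + d 0 *s u1)
            = (\<chi> i. Rv i z)"
      proof -
        have ss: "(\<Sum>k=1..m. \<alpha> (k + 2) / z ^ (k + 2)) = S z"
          unfolding \<alpha>_def S_def by (rule reindex_poles)
        show ?thesis unfolding ss using decX[OF zb] cz
          by (simp add: vec_eq_iff field_simps add_divide_distrib)
      qed
      moreover have "z \<in> cball 0 (r/2)" using z by (auto simp: dist_norm)
      ultimately show ?thesis using B by simp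
    qed
    show "\<forall>\<^sub>F z in at 0. norm (X z - (\<Sum>k=1..m. \<alpha> (k + 2) / z ^ (k + 2)) *s u0
            - (1 / z ^ 2) *s (c m *s u0 + d 0 *s u1)) \<le> B"
      unfolding eventually_at using r bnd by (intro exI[of _ "r/2"]) auto
  qed
qed




lemma span3:
  fixes x y z :: "real^4"
  assumes LI: "\<forall>a b c. a *\<^sub>R x + b *\<^sub>R y + c *\<^sub>R z = 0 \<longrightarrow> a = 0 \<and> b = 0 \<and> c = 0"
    and o1: "lor_r x x = 0" and o2: "lor_r x y = 0" and o3: "lor_r x z = 0"
  shows "dim (span {x, y, z}) = 3 \<and> degenerate_subspace (span {x, y, z})"
proof
  have xy: "x \<noteq> y" using LI[rule_format, of 1 "-1" 0] by auto
  have xz: "x \<noteq> z" using LI[rule_format, of 1 0 "-1"] by auto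
  have yz: "y \<noteq> z" using LI[rule_format, of 0 1 "-1"] by auto
  have x0: "x \<noteq> 0" using LI[rule_format, of 1 0 0] by auto
  have ind: "independent {x, y, z}"
  proof (rule independent_if_scalars_zero)
    fix f v assume s: "(\<Sum>v\<in>{x, y, z}. f v *\<^sub>R v) = 0" and v: "v \<in> {x, y, z}"
    have "f x *\<^sub>R x + f y *\<^sub>R y + f z *\<^sub>R z = 0" using s xy xz yz by (simp add: add.assoc)
    then have "f x = 0 \<and> f y = 0 \<and> f z = 0" using LI by blast
    then show "f v = 0" using v by auto
  qed simp
  show "dim (span {x, y, z}) = 3"
    using dim_eq_card_independent[OF ind] xy xz yz by simp
  have lin: "lor_r x (a *\<^sub>R u + b *\<^sub>R v) = a * lor_r x u + b * lor_r x v" for a b u v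
    by (simp add: lor_r_def algebra_simps)
  have sub: "subspace {u. lor_r x u = 0}"
    unfolding subspace_def
  proof (intro conjI ballI allI)
    show "0 \<in> {u. lor_r x u = 0}" by (simp add: lor_r_def)
    fix u v assume "u \<in> {u. lor_r x u = 0}" "v \<in> {u. lor_r x u = 0}"
    then show "u + v \<in> {u. lor_r x u = 0}" using lin[of 1 u 1 v] by simp
  next
    fix a u assume "u \<in> {u. lor_r x u = 0}"
    then show "a *\<^sub>R u \<in> {u. lor_r x u = 0}" using lin[of a u 0 u] by simp
  qed
  have "\<forall>u\<in>span {x, y, z}. lor_r x u = 0"
  proof
    fix u assume "u \<in> span {x, y, z}"
    then show "lor_r x u = 0"
      by (rule span_induct[OF _ sub]) (use o1 o2 o3 in auto)
  qed
  then show "degenerate_subspace (span {x, y, z})"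
    unfolding degenerate_subspace_def using x0 by (intro bexI[of _ x]) (auto intro: span_base)
qed

lemma expand_value:
  fixes \<phi> :: "complex \<Rightarrow> complex"
  assumes r: "r > 0" and hol: "\<phi> holomorphic_on ball 0 r - {0}" and lim: "(\<phi> \<longlongrightarrow> c) (at 0)"
    and vm: "value_mult \<phi> c = enat k"
  shows "\<exists>\<rho> F. \<rho> > 0 \<and> \<rho> \<le> r \<and> F holomorphic_on ball 0 \<rho> \<and> F 0 \<noteq> 0 \<and>
           (\<forall>w\<in>ball 0 \<rho> - {0}. \<phi> w = c + w^k * F w)"
proof -
  have ne: "\<not> (\<forall>\<^sub>F z in at 0. \<phi> z = c)" and kz: "k = nat (zorder (\<lambda>z. \<phi> z - c) 0)"
    using vm unfolding value_mult_def by (auto split: if_splits)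
  define f where "f = (\<lambda>z. (if z = 0 then c else \<phi> z) - c)"
  have fh: "f holomorphic_on ball 0 r"
    unfolding f_def by (intro holomorphic_intros removable_singularity hol lim) auto
  have nc: "\<exists>w\<in>ball 0 r. f w \<noteq> 0"
  proof (rule ccontr)
    assume "\<not> ?thesis"
    then have "\<forall>w\<in>ball 0 r - {0}. \<phi> w = c"
    proof (intro ballI)
      fix w :: complex assume w: "w \<in> ball 0 r - {0}"
      then have "f w = 0" using \<open>\<not> (\<exists>w\<in>ball 0 r. f w \<noteq> 0)\<close> by auto
      then show "\<phi> w = c" using w by (simp add: f_def)
    qed
    then have "\<forall>\<^sub>F z in at 0. \<phi> z = c"
      unfolding eventually_at using r by (intro exI[of _ r]) (auto simp: dist_commute)
    then show False using ne by simp
  qed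
  have zo: "zorder f 0 = zorder (\<lambda>z. \<phi> z - c) 0"
    by (rule zorder_cong) (auto simp: f_def eventually_at_filter)
  have b0: "0 \<in> ball (0::complex) r" using r by simp
  from zorder_exist_zero[OF fh open_ball connected_ball b0 nc]
  obtain \<rho> where \<rho>: "\<rho> > 0" "cball (0::complex) \<rho> \<subseteq> ball 0 r" "zor_poly f 0 holomorphic_on cball 0 \<rho>"
     "\<forall>w\<in>cball 0 \<rho>. f w = zor_poly f 0 w * (w - 0) ^ nat (zorder f 0) \<and> zor_poly f 0 w \<noteq> 0"
    by auto
  show ?thesis
  proof (intro exI conjI ballI)
    show "\<rho> > 0" by fact
    have "complex_of_real \<rho> \<in> cball 0 \<rho>" using \<rho>(1) by simp
    then have "complex_of_real \<rho> \<in> ball 0 r" using \<rho>(2) by blast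
    then show "\<rho> \<le> r" using \<rho>(1) by simp
    show "zor_poly f 0 holomorphic_on ball 0 \<rho>" using \<rho>(3) by (rule holomorphic_on_subset) auto
    show "zor_poly f 0 0 \<noteq> 0" using \<rho>(1,4) by auto
    fix w :: complex assume w: "w \<in> ball 0 \<rho> - {0}"
    then have "f w = zor_poly f 0 w * w ^ k" using \<rho>(4) zo kz by auto
    then show "\<phi> w = c + w ^ k * zor_poly f 0 w" using w by (auto simp: f_def algebra_simps)
  qed
qed

lemma expand_pole:
  fixes \<phi> :: "complex \<Rightarrow> complex"
  assumes r: "r > 0" and hol: "\<phi> holomorphic_on ball 0 r - {0}" and p: "is_pole \<phi> 0"
  shows "\<exists>\<rho> F. \<rho> > 0 \<and> \<rho> \<le> r \<and> F holomorphic_on ball 0 \<rho> \<and> F 0 \<noteq> 0 \<and>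
           (\<forall>w\<in>ball 0 \<rho> - {0}. \<phi> w \<noteq> 0 \<and> 1 / \<phi> w = w^(nat (- zorder \<phi> 0)) * F w)"
proof -
  have "zorder \<phi> 0 < 0 \<and> zor_poly \<phi> 0 0 \<noteq> 0 \<and> (\<exists>r'. r'>0 \<and> cball (0::complex) r' \<subseteq> ball 0 r \<and> zor_poly \<phi> 0 holomorphic_on cball 0 r'
    \<and> (\<forall>w\<in>cball 0 r' - {0}. \<phi> w  = zor_poly \<phi> 0 w / (w-0) ^ nat (- zorder \<phi> 0) \<and> zor_poly \<phi> 0 w \<noteq>0))"
    using zorder_exist_pole[OF hol open_ball _ p] r by simp
  then obtain \<rho> where \<rho>: "zor_poly \<phi> 0 0 \<noteq> 0" "\<rho> > 0" "cball (0::complex) \<rho> \<subseteq> ball 0 r" "zor_poly \<phi> 0 holomorphic_on cball 0 \<rho>"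
     "\<forall>w\<in>cball 0 \<rho> - {0}. \<phi> w = zor_poly \<phi> 0 w / (w - 0) ^ nat (- zorder \<phi> 0) \<and> zor_poly \<phi> 0 w \<noteq> 0"
    by blast
  define P where "P = zor_poly \<phi> 0"
  have Pnz: "\<forall>w\<in>cball 0 \<rho>. P w \<noteq> 0"
  proof
    fix w :: complex assume w: "w \<in> cball 0 \<rho>"
    show "P w \<noteq> 0"
    proof (cases "w = 0")
      case True then show ?thesis using \<rho>(1) unfolding P_def by simp
    next
      case False then have "w \<in> cball 0 \<rho> - {0}" using w by blast
      then show ?thesis using \<rho>(5) unfolding P_def by blast
    qed
  qed
  have Ph: "P holomorphic_on ball 0 \<rho>" using \<rho>(4) unfolding P_def[symmetric]
    by (rule holomorphic_on_subset) (rule ball_subset_cball)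
  show ?thesis
  proof (intro exI conjI ballI)
    show "\<rho> > 0" by fact
    have "complex_of_real \<rho> \<in> cball 0 \<rho>" using \<rho>(2) by simp
    then have "complex_of_real \<rho> \<in> ball 0 r" using \<rho>(3) by blast
    then show "\<rho> \<le> r" using \<rho>(2) by simp
    show "(\<lambda>w. 1 / P w) holomorphic_on ball 0 \<rho>"
      using Pnz by (intro holomorphic_intros Ph) auto
    show "1 / P 0 \<noteq> 0" using \<rho>(1) by (simp add: P_def)
    fix w :: complex assume w: "w \<in> ball 0 \<rho> - {0}"
    then have wc: "w \<in> cball 0 \<rho> - {0}" by auto
    have e: "\<phi> w = P w / w ^ nat (- zorder \<phi> 0)" "P w \<noteq> 0" using \<rho>(5) wc unfolding P_def by auto
    have w0: "w \<noteq> 0" using w by blast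
    show "\<phi> w \<noteq> 0" unfolding e(1) using e(2) w0 by simp
    show "1 / \<phi> w = w ^ nat (- zorder \<phi> 0) * (1 / P w)" unfolding e(1) using e(2) w0 by simp
  qed
qed




definition vF :: "complex \<Rightarrow> real^4" where
  "vF c = (\<chi> i. if i = 1 then 2 * Re c else if i = 2 then 2 * Im c
            else if i = 3 then 1 - (Re c ^ 2 + Im c ^ 2) else 1 + (Re c ^ 2 + Im c ^ 2))"
definition u1F :: "complex \<Rightarrow> complex^4" where
  "u1F c = (\<chi> i. if i = 1 then 1 else if i = 2 then - \<i> else if i = 3 then - cnj c else cnj c)"
definition u2F :: "complex \<Rightarrow> complex^4" where
  "u2F c = (\<chi> i. if i = 1 then 1 else if i = 2 then \<i> else if i = 3 then - c else c)"
definition eF :: "complex^4" where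
  "eF = (\<chi> i. if i = 3 then -1 else if i = 4 then 1 else 0)"

lemma vF_comp: "vF c $ 1 = 2 * Re c" "vF c $ 2 = 2 * Im c" "vF c $ 3 = 1 - (Re c ^ 2 + Im c ^ 2)"
   "vF c $ 4 = 1 + (Re c ^ 2 + Im c ^ 2)"
  by (simp_all add: vF_def)

lemma u1F_comp: "u1F c $ 1 = 1" "u1F c $ 2 = - \<i>" "u1F c $ 3 = - cnj c" "u1F c $ 4 = cnj c"
  by (simp_all add: u1F_def)
lemma u2F_comp: "u2F c $ 1 = 1" "u2F c $ 2 = \<i>" "u2F c $ 3 = - c" "u2F c $ 4 = c"
  by (simp_all add: u2F_def)
lemma eF_comp: "eF $ 1 = 0" "eF $ 2 = 0" "eF $ 3 = -1" "eF $ 4 = 1"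
  by (simp_all add: eF_def)

lemma cvF_comp: "cvec (vF c) $ 1 = c + cnj c" "cvec (vF c) $ 2 = - \<i> * (c - cnj c)"
  "cvec (vF c) $ 3 = 1 - c * cnj c" "cvec (vF c) $ 4 = 1 + c * cnj c"
  by (simp_all add: cvec_def vF_comp complex_eq_iff power2_eq_square)

lemma xzF:
  assumes "\<phi> z = c + f" "\<psi> z = cnj c + g"
  shows "xz \<phi> \<psi> h z $ i = h z * cvec (vF c) $ i + h z * f * u1F c $ i + h z * g * u2F c $ i
           + h z * f * g * eF $ i"
  using exhaust_4[of i] assms
  by (auto simp: xz_def cvF_comp u1F_comp u2F_comp eF_comp algebra_simps)

lemma indepF: "\<forall>a b d. a *s cvec (vF c) + b *s u1F c + d *s u2F c = 0 \<longrightarrow> a = 0 \<and> b = 0 \<and> d = 0"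
proof (intro allI impI)
  fix a b d assume H: "a *s cvec (vF c) + b *s u1F c + d *s u2F c = 0"
  have e: "(a *s cvec (vF c) + b *s u1F c + d *s u2F c) $ k = 0" for k using H by simp
  have e1: "a * (c + cnj c) + b + d = 0" using e[of 1] by (simp add: cvF_comp u1F_comp u2F_comp)
  have e2: "- (a * (\<i> * (c - cnj c))) - b * \<i> + d * \<i> = 0" using e[of 2] by (simp add: cvF_comp u1F_comp u2F_comp)
  have e3: "a * (1 - c * cnj c) - b * cnj c - d * c = 0" using e[of 3] by (simp add: cvF_comp u1F_comp u2F_comp)
  have e4: "a * (1 + c * cnj c) + b * cnj c + d * c = 0" using e[of 4] by (simp add: cvF_comp u1F_comp u2F_comp)
  have s0: "(a * (1 - c * cnj c) - b * cnj c - d * c) + (a * (1 + c * cnj c) + b * cnj c + d * c) = 0"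
    using e3 e4 by simp
  have "(a * (1 - c * cnj c) - b * cnj c - d * c) + (a * (1 + c * cnj c) + b * cnj c + d * c) = 2 * a"
    by algebra
  with s0 have "2 * a = 0" by simp
  then have a: "a = 0" by simp
  from e1 a have "b + d = 0" by simp
  then have "d = - b" by (simp add: add_eq_0_iff)
  with e2 a have "- (2 * \<i> * b) = 0" by (simp add: algebra_simps)
  then have "b = 0" by simp
  then show "a = 0 \<and> b = 0 \<and> d = 0" using a \<open>d = - b\<close> by simp
qed

lemma isoF: "isotropic (a *s cvec (vF c) + \<beta> *s u1F c)"
proof -
  have ii: "\<i> * \<i> = -1" by simp
  show ?thesis unfolding isotropic_def lor_def
    by (simp add: cvF_comp u1F_comp) (use ii in algebra)
qed

lemma ReF: "Re_vec (a *s cvec (vF c) + \<beta> *s u1F c) $ k = Re a * vF c $ k + Re (\<beta> * u1F c $ k)"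
  by (simp add: Re_vec_def cvec_def)
lemma ImF: "Im_vec (a *s cvec (vF c) + \<beta> *s u1F c) $ k = Im a * vF c $ k + Im (\<beta> * u1F c $ k)"
  by (simp add: Im_vec_def cvec_def)

lemma orthF:
  "lor_r (vF c) (vF c) = 0"
  "lor_r (vF c) (Re_vec (a *s cvec (vF c) + \<beta> *s u1F c)) = 0"
  "lor_r (vF c) (Im_vec (a *s cvec (vF c) + \<beta> *s u1F c)) = 0"
    apply (simp add: lor_r_def vF_comp algebra_simps power2_eq_square)
   apply (unfold lor_r_def ReF vF_comp u1F_comp, simp add: algebra_simps power2_eq_square)
  apply (unfold lor_r_def ImF vF_comp u1F_comp, simp add: algebra_simps power2_eq_square)
  done

lemma LIF:
  assumes b: "\<beta> \<noteq> 0"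
  shows "\<forall>l m n. l *\<^sub>R vF c + m *\<^sub>R Re_vec (a *s cvec (vF c) + \<beta> *s u1F c)
                  + n *\<^sub>R Im_vec (a *s cvec (vF c) + \<beta> *s u1F c) = 0 \<longrightarrow> l = 0 \<and> m = 0 \<and> n = 0"
proof (intro allI impI)
  fix l m n :: real
  assume H: "l *\<^sub>R vF c + m *\<^sub>R Re_vec (a *s cvec (vF c) + \<beta> *s u1F c)
                  + n *\<^sub>R Im_vec (a *s cvec (vF c) + \<beta> *s u1F c) = 0"
  have e: "(l *\<^sub>R vF c + m *\<^sub>R Re_vec (a *s cvec (vF c) + \<beta> *s u1F c)
                  + n *\<^sub>R Im_vec (a *s cvec (vF c) + \<beta> *s u1F c)) $ k = 0" for k
    using H by simp
  note ss = ReF ImF vF_comp u1F_comp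
  have e1: "l * (2 * Re c) + m * (Re a * (2 * Re c) + Re \<beta>) + n * (Im a * (2 * Re c) + Im \<beta>) = 0"
    using e[of 1] by (simp add: ss)
  have e2: "l * (2 * Im c) + m * (Re a * (2 * Im c) + Im \<beta>) + n * (Im a * (2 * Im c) - Re \<beta>) = 0"
    using e[of 2] by (simp add: ss)
  have e3: "l * (1 - (Re c ^ 2 + Im c ^ 2)) + m * (Re a * (1 - (Re c ^ 2 + Im c ^ 2)) - (Re \<beta> * Re c + Im \<beta> * Im c))
       + n * (Im a * (1 - (Re c ^ 2 + Im c ^ 2)) - (Im \<beta> * Re c - Re \<beta> * Im c)) = 0"
    using e[of 3] by (simp add: ss; simp add: algebra_simps)
  have e4: "l * (1 + (Re c ^ 2 + Im c ^ 2)) + m * (Re a * (1 + (Re c ^ 2 + Im c ^ 2)) + (Re \<beta> * Re c + Im \<beta> * Im c))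
       + n * (Im a * (1 + (Re c ^ 2 + Im c ^ 2)) + (Im \<beta> * Re c - Re \<beta> * Im c)) = 0"
    using e[of 4] by (simp add: ss; simp add: algebra_simps)
  have L: "l = - (m * Re a + n * Im a)"
  proof -
    have "2 * l + 2 * (m * Re a) + 2 * (n * Im a) = 0"
      using arg_cong2[OF e3 e4, of "(+)"] by (simp add: algebra_simps)
    then show ?thesis by simp
  qed
  have f1: "m * Re \<beta> + n * Im \<beta> = 0" using e1 unfolding L by (simp add: algebra_simps)
  have f2: "m * Im \<beta> - n * Re \<beta> = 0" using e2 unfolding L by (simp add: algebra_simps)
  have "m * (Re \<beta> ^ 2 + Im \<beta> ^ 2) = Re \<beta> * (m * Re \<beta> + n * Im \<beta>) + Im \<beta> * (m * Im \<beta> - n * Re \<beta>)"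
    by (simp add: algebra_simps power2_eq_square)
  also have "\<dots> = 0" using f1 f2 by simp
  finally have m1: "m * (Re \<beta> ^ 2 + Im \<beta> ^ 2) = 0" .
  have "n * (Re \<beta> ^ 2 + Im \<beta> ^ 2) = Im \<beta> * (m * Re \<beta> + n * Im \<beta>) - Re \<beta> * (m * Im \<beta> - n * Re \<beta>)"
    by (simp add: algebra_simps power2_eq_square)
  also have "\<dots> = 0" using f1 f2 by simp
  finally have n1: "n * (Re \<beta> ^ 2 + Im \<beta> ^ 2) = 0" .
  have pos: "Re \<beta> ^ 2 + Im \<beta> ^ 2 \<noteq> 0" using b by (simp add: complex_eq_iff add_nonneg_eq_0_iff)
  have "m = 0" "n = 0" using m1 n1 pos by auto
  then show "l = 0 \<and> m = 0 \<and> n = 0" using L by simp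
qed




definition vP :: "real^4" where
  "vP = (\<chi> i. if i = 3 then -1 else if i = 4 then 1 else 0)"
definition u1P :: "complex^4" where
  "u1P = (\<chi> i. if i = 1 then 1 else if i = 2 then \<i> else 0)"
definition u2P :: "complex^4" where
  "u2P = (\<chi> i. if i = 1 then 1 else if i = 2 then - \<i> else 0)"
definition eP :: "complex^4" where
  "eP = (\<chi> i. if i = 3 then 1 else if i = 4 then 1 else 0)"

lemma vP_comp: "vP $ 1 = 0" "vP $ 2 = 0" "vP $ 3 = -1" "vP $ 4 = 1"
  by (simp_all add: vP_def)
lemma cvP_comp: "cvec vP $ 1 = 0" "cvec vP $ 2 = 0" "cvec vP $ 3 = -1" "cvec vP $ 4 = 1"
  by (simp_all add: vP_def cvec_def)
lemma u1P_comp: "u1P $ 1 = 1" "u1P $ 2 = \<i>" "u1P $ 3 = 0" "u1P $ 4 = 0"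
  by (simp_all add: u1P_def)
lemma u2P_comp: "u2P $ 1 = 1" "u2P $ 2 = - \<i>" "u2P $ 3 = 0" "u2P $ 4 = 0"
  by (simp_all add: u2P_def)
lemma eP_comp: "eP $ 1 = 0" "eP $ 2 = 0" "eP $ 3 = 1" "eP $ 4 = 1"
  by (simp_all add: eP_def)

lemma xzP:
  assumes "\<phi> z \<noteq> 0" "\<psi> z \<noteq> 0"
  shows "xz \<phi> \<psi> h z $ i = (h z * \<phi> z * \<psi> z) * cvec vP $ i + (h z * \<phi> z * \<psi> z) * (1 / \<phi> z) * u1P $ i
     + (h z * \<phi> z * \<psi> z) * (1 / \<psi> z) * u2P $ i + (h z * \<phi> z * \<psi> z) * (1 / \<phi> z) * (1 / \<psi> z) * eP $ i"
  using exhaust_4[of i] assms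
  by (auto simp: xz_def cvP_comp u1P_comp u2P_comp eP_comp field_simps)

lemma indepP: "\<forall>a b d. a *s cvec vP + b *s u1P + d *s u2P = 0 \<longrightarrow> a = 0 \<and> b = 0 \<and> d = 0"
proof (intro allI impI)
  fix a b d assume H: "a *s cvec vP + b *s u1P + d *s u2P = 0"
  have e: "(a *s cvec vP + b *s u1P + d *s u2P) $ k = 0" for k using H by simp
  have e1: "b + d = 0" using e[of 1] by (simp add: cvP_comp u1P_comp u2P_comp)
  have e2: "\<i> * b - \<i> * d = 0" using e[of 2] by (simp add: cvP_comp u1P_comp u2P_comp algebra_simps)
  have e3: "a = 0" using e[of 3] by (simp add: cvP_comp u1P_comp u2P_comp)
  from e2 have "b = d" by (simp add: right_diff_distrib[symmetric])
  then show "a = 0 \<and> b = 0 \<and> d = 0" using e1 e3 by simp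
qed

lemma isoP: "isotropic (a *s cvec vP + \<beta> *s u1P)"
proof -
  have ii: "\<i> * \<i> = -1" by simp
  show ?thesis unfolding isotropic_def lor_def
    by (simp add: cvP_comp u1P_comp) (use ii in algebra)
qed

lemma ReP: "Re_vec (a *s cvec vP + \<beta> *s u1P) $ k = Re a * vP $ k + Re (\<beta> * u1P $ k)"
  by (simp add: Re_vec_def cvec_def)
lemma ImP: "Im_vec (a *s cvec vP + \<beta> *s u1P) $ k = Im a * vP $ k + Im (\<beta> * u1P $ k)"
  by (simp add: Im_vec_def cvec_def)

lemma orthP:
  "lor_r vP vP = 0"
  "lor_r vP (Re_vec (a *s cvec vP + \<beta> *s u1P)) = 0"
  "lor_r vP (Im_vec (a *s cvec vP + \<beta> *s u1P)) = 0"
    apply (simp add: lor_r_def vP_comp)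
   apply (unfold lor_r_def ReP vP_comp u1P_comp, simp)
  apply (unfold lor_r_def ImP vP_comp u1P_comp, simp)
  done

lemma LIP:
  assumes b: "\<beta> \<noteq> 0"
  shows "\<forall>l m n. l *\<^sub>R vP + m *\<^sub>R Re_vec (a *s cvec vP + \<beta> *s u1P)
                  + n *\<^sub>R Im_vec (a *s cvec vP + \<beta> *s u1P) = 0 \<longrightarrow> l = 0 \<and> m = 0 \<and> n = 0"
proof (intro allI impI)
  fix l m n :: real
  assume H: "l *\<^sub>R vP + m *\<^sub>R Re_vec (a *s cvec vP + \<beta> *s u1P)
                  + n *\<^sub>R Im_vec (a *s cvec vP + \<beta> *s u1P) = 0"
  have e: "(l *\<^sub>R vP + m *\<^sub>R Re_vec (a *s cvec vP + \<beta> *s u1P)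
                  + n *\<^sub>R Im_vec (a *s cvec vP + \<beta> *s u1P)) $ k = 0" for k
    using H by simp
  note ss = ReP ImP vP_comp u1P_comp
  have f1: "m * Re \<beta> + n * Im \<beta> = 0" using e[of 1] by (simp add: ss)
  have f2: "- (m * Im \<beta>) + n * Re \<beta> = 0" using e[of 2] by (simp add: ss)
  have L: "l = - (m * Re a + n * Im a)" using e[of 4] by (simp add: ss; simp add: algebra_simps)
  have "m * (Re \<beta> ^ 2 + Im \<beta> ^ 2) = Re \<beta> * (m * Re \<beta> + n * Im \<beta>) - Im \<beta> * (- (m * Im \<beta>) + n * Re \<beta>)"
    by (simp add: algebra_simps power2_eq_square)
  also have "\<dots> = 0" using f1 f2 by simp
  finally have m1: "m * (Re \<beta> ^ 2 + Im \<beta> ^ 2) = 0" .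
  have "n * (Re \<beta> ^ 2 + Im \<beta> ^ 2) = Im \<beta> * (m * Re \<beta> + n * Im \<beta>) + Re \<beta> * (- (m * Im \<beta>) + n * Re \<beta>)"
    by (simp add: algebra_simps power2_eq_square)
  also have "\<dots> = 0" using f1 f2 by simp
  finally have n1: "n * (Re \<beta> ^ 2 + Im \<beta> ^ 2) = 0" .
  have pos: "Re \<beta> ^ 2 + Im \<beta> ^ 2 \<noteq> 0" using b by (simp add: complex_eq_iff add_nonneg_eq_0_iff)
  have "m = 0" "n = 0" using m1 n1 pos by auto
  then show "l = 0 \<and> m = 0 \<and> n = 0" using L by simp
qed




lemma conclude:
  fixes X :: "complex \<Rightarrow> complex^4" and v0 :: "real^4" and u1 :: "complex^4"
  assumes ex: "\<exists>\<alpha> a \<beta>. \<alpha> (m+2) \<noteq> 0 \<and> \<beta> \<noteq> 0 \<and> (\<exists>B. \<forall>\<^sub>F z in at 0.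
           norm (X z - (\<Sum>k=1..m. \<alpha> (k + 2) / z ^ (k + 2)) *s cvec v0 - (1 / z ^ 2) *s (a *s cvec v0 + \<beta> *s u1)) \<le> B)"
    and iso: "\<And>a \<beta>. isotropic (a *s cvec v0 + \<beta> *s u1)"
    and LI: "\<And>a \<beta>. \<beta> \<noteq> 0 \<Longrightarrow> \<forall>l m n. l *\<^sub>R v0 + m *\<^sub>R Re_vec (a *s cvec v0 + \<beta> *s u1)
                  + n *\<^sub>R Im_vec (a *s cvec v0 + \<beta> *s u1) = 0 \<longrightarrow> l = 0 \<and> m = 0 \<and> n = 0"
    and o1: "lor_r v0 v0 = 0"
    and o2: "\<And>a \<beta>. lor_r v0 (Re_vec (a *s cvec v0 + \<beta> *s u1)) = 0"
    and o3: "\<And>a \<beta>. lor_r v0 (Im_vec (a *s cvec v0 + \<beta> *s u1)) = 0"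
  shows "\<exists>(\<alpha>::nat \<Rightarrow> complex) (v0::real^4) (v1::complex^4).
           \<alpha> (m + 2) \<noteq> 0 \<and> lightlike v0 \<and> isotropic v1 \<and>
           dim (span {v0, Re_vec v1, Im_vec v1}) = 3 \<and>
           degenerate_subspace (span {v0, Re_vec v1, Im_vec v1}) \<and>
           (\<exists>B. \<forall>\<^sub>F z in at 0.
              norm (X z - (\<Sum>k=1..m. \<alpha> (k + 2) / z ^ (k + 2)) *s cvec v0
                    - (1 / z ^ 2) *s v1) \<le> B)"
proof -
  obtain \<alpha> a \<beta> B where A: "\<alpha> (m+2) \<noteq> 0" "\<beta> \<noteq> 0" and B: "\<forall>\<^sub>F z in at 0.
           norm (X z - (\<Sum>k=1..m. \<alpha> (k + 2) / z ^ (k + 2)) *s cvec v0 - (1 / z ^ 2) *s (a *s cvec v0 + \<beta> *s u1)) \<le> B"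
    using ex by blast
  have LI': "\<forall>l m n. l *\<^sub>R v0 + m *\<^sub>R Re_vec (a *s cvec v0 + \<beta> *s u1)
                  + n *\<^sub>R Im_vec (a *s cvec v0 + \<beta> *s u1) = 0 \<longrightarrow> l = 0 \<and> m = 0 \<and> n = 0"
    using LI[OF A(2)] .
  have v00: "v0 \<noteq> 0" using LI'[rule_format, of 1 0 0] by auto
  have sp: "dim (span {v0, Re_vec (a *s cvec v0 + \<beta> *s u1), Im_vec (a *s cvec v0 + \<beta> *s u1)}) = 3 \<and>
     degenerate_subspace (span {v0, Re_vec (a *s cvec v0 + \<beta> *s u1), Im_vec (a *s cvec v0 + \<beta> *s u1)})"
    by (rule span3[OF LI' o1 o2 o3])
  show ?thesis
    using A(1) sp B iso v00 o1 unfolding lightlike_def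
    by (intro exI[of _ \<alpha>] exI[of _ v0] exI[of _ "a *s cvec v0 + \<beta> *s u1"]) blast
qed



theorem mainTheorem4:
  fixes \<phi> \<psi> h :: "complex \<Rightarrow> complex" and r :: real
    and m' n' :: enat and m d :: nat
  assumes r: "r > 0"
    and hol: "\<phi> holomorphic_on (ball 0 r - {0})" "\<psi> holomorphic_on (ball 0 r - {0})"
             "h holomorphic_on (ball 0 r - {0})"
    and mero: "not_essential \<phi> 0" "not_essential \<psi> 0" "not_essential h 0"
    and spacelike: "\<forall>z \<in> ball 0 r - {0}. \<phi> z \<noteq> cnj (\<psi> z)"
    and immersed: "\<forall>z \<in> ball 0 r - {0}. h z \<noteq> 0"
    and singular: "singular_end_mults \<phi> \<psi> m' n'"
    and good: "m' \<noteq> n'"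
    and ind: "end_index m' n' = int m" "m \<ge> 1"
    and pole: "vpole_order (xz \<phi> \<psi> h) (d + 1)"
    and mult1: "int d - \<bar>end_index m' n'\<bar> = 1"
    and flux: "\<forall>i. residue (\<lambda>z. xz \<phi> \<psi> h z $ i) 0 = 0"
  shows "\<exists>(\<alpha>::nat \<Rightarrow> complex) (v0::real^4) (v1::complex^4).
           \<alpha> (m + 2) \<noteq> 0 \<and> lightlike v0 \<and> isotropic v1 \<and>
           dim (span {v0, Re_vec v1, Im_vec v1}) = 3 \<and>
           degenerate_subspace (span {v0, Re_vec v1, Im_vec v1}) \<and>
           (\<exists>B. \<forall>\<^sub>F z in at 0.
              norm (xz \<phi> \<psi> h z - (\<Sum>k=1..m. \<alpha> (k + 2) / z ^ (k + 2)) *s cvec v0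
                    - (1 / z ^ 2) *s v1) \<le> B)"
proof -
  have mlt: "m' < n'" and mm: "m' = enat m"
  proof -
    have "m' < n'"
    proof (rule ccontr)
      assume "\<not> m' < n'"
      then have "- int (the_enat n') = int m" using ind(1) by (simp add: end_index_def)
      then show False using ind(2) by linarith
    qed
    moreover have "the_enat m' = m" using ind(1) \<open>m' < n'\<close> by (simp add: end_index_def)
    moreover have "m' \<noteq> \<infinity>" using \<open>m' < n'\<close> by (cases m') auto
    ultimately have "m' = enat m" by (cases m') auto
    then show "m' < n'" "m' = enat m" using \<open>m' < n'\<close> by auto
  qed
  have dm: "d + 1 = m + 2" using mult1 ind(1) by simp
  obtain L where L: "L \<noteq> 0" "((\<lambda>z. z ^ (m + 2) *s xz \<phi> \<psi> h z) \<longlongrightarrow> L) (at 0)"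
    using pole unfolding vpole_order_def dm by blast
  from singular consider
      (P) "is_pole \<phi> 0" "is_pole \<psi> 0" "m' = pole_mult \<phi>" "n' = pole_mult \<psi>"
    | (V) c where "(\<phi> \<longlongrightarrow> c) (at 0)" "(\<psi> \<longlongrightarrow> cnj c) (at 0)" "m' = value_mult \<phi> c" "n' = value_mult \<psi> (cnj c)"
    unfolding singular_end_mults_def by blast
  then show ?thesis
  proof cases
    case P
    obtain \<rho>1 F where \<rho>1: "\<rho>1 > 0" "\<rho>1 \<le> r" "F holomorphic_on ball 0 \<rho>1" "F 0 \<noteq> 0"
      "\<forall>w\<in>ball 0 \<rho>1 - {0}. \<phi> w \<noteq> 0 \<and> 1 / \<phi> w = w^(nat (- zorder \<phi> 0)) * F w"
      using expand_pole[OF r hol(1) P(1)] by blast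
    obtain \<rho>2 G0 where \<rho>2: "\<rho>2 > 0" "\<rho>2 \<le> r" "G0 holomorphic_on ball 0 \<rho>2"
      "\<forall>w\<in>ball 0 \<rho>2 - {0}. \<psi> w \<noteq> 0 \<and> 1 / \<psi> w = w^(nat (- zorder \<psi> 0)) * G0 w"
      using expand_pole[OF r hol(2) P(2)] by blast
    define n where "n = nat (- zorder \<psi> 0)"
    have km: "nat (- zorder \<phi> 0) = m" using P(3) mm by (simp add: pole_mult_def)
    have mn: "m < n" using P(4) mlt mm by (simp add: pole_mult_def n_def)
    define \<rho> where "\<rho> = min \<rho>1 \<rho>2"
    define G where "G = (\<lambda>w. w^(n - m - 1) * G0 w)"
    have \<rho>: "\<rho> > 0" "\<rho> \<le> r" using \<rho>1 \<rho>2 by (auto simp: \<rho>_def)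
    have bs1: "ball 0 \<rho> \<subseteq> ball (0::complex) \<rho>1" and bs2: "ball 0 \<rho> \<subseteq> ball (0::complex) \<rho>2"
      and bs: "ball 0 \<rho> \<subseteq> ball (0::complex) r" using \<rho>(2) by (auto simp: \<rho>_def)
    have fe: "\<phi> w \<noteq> 0 \<and> 1 / \<phi> w = w^m * F w" if "w \<in> ball 0 \<rho> - {0}" for w
      using \<rho>1(5) that bs1 km by auto
    have ge: "\<psi> w \<noteq> 0 \<and> 1 / \<psi> w = w^(m+1) * G w" if "w \<in> ball 0 \<rho> - {0}" for w
    proof -
      have nn: "n = (m+1) + (n-m-1)" using mn by simp
      have "w^n = w^(m+1) * w^(n-m-1)" by (metis nn power_add)
      then show ?thesis using \<rho>2(4) that bs2 unfolding G_def n_def[symmetric] by (auto simp: algebra_simps)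
    qed
    have H0h: "(\<lambda>z. h z * \<phi> z * \<psi> z) holomorphic_on ball 0 \<rho> - {0}"
        by (intro holomorphic_intros holomorphic_on_subset[OF hol(1)] holomorphic_on_subset[OF hol(2)]
            holomorphic_on_subset[OF hol(3)]) (use bs in auto)
    have core_res: "\<exists>\<alpha> a \<beta>. \<alpha> (m+2) \<noteq> 0 \<and> \<beta> \<noteq> 0 \<and> (\<exists>B. \<forall>\<^sub>F z in at 0.
           norm (xz \<phi> \<psi> h z - (\<Sum>k=1..m. \<alpha> (k + 2) / z ^ (k + 2)) *s cvec vP - (1 / z ^ 2) *s (a *s cvec vP + \<beta> *s u1P)) \<le> B)"
    proof (rule core[OF \<rho>(1) H0h, where F = F and G = G
          and ?u2.0 = u2P and e = eP and ?p3.0 = "-1/2" and ?p4.0 = "1/2" and L = L])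
      show "F holomorphic_on ball 0 \<rho>" using \<rho>1(3) bs1 by (rule holomorphic_on_subset)
      show "G holomorphic_on ball 0 \<rho>" unfolding G_def
        by (intro holomorphic_intros holomorphic_on_subset[OF \<rho>2(3) bs2])
      show "F 0 \<noteq> 0" by fact
      show "1 \<le> m" by fact
      show "\<forall>z\<in>ball 0 \<rho> - {0}. \<forall>i. xz \<phi> \<psi> h z $ i = h z * \<phi> z * \<psi> z * cvec vP $ i
         + h z * \<phi> z * \<psi> z * (z ^ m * F z) * u1P $ i + h z * \<phi> z * \<psi> z * (z ^ (m + 1) * G z) * u2P $ i
         + h z * \<phi> z * \<psi> z * (z ^ m * F z) * (z ^ (m + 1) * G z) * eP $ i"
      proof (intro ballI allI)
        fix z :: complex and i :: 4 assume z: "z \<in> ball 0 \<rho> - {0}"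
        show "xz \<phi> \<psi> h z $ i = h z * \<phi> z * \<psi> z * cvec vP $ i
         + h z * \<phi> z * \<psi> z * (z ^ m * F z) * u1P $ i + h z * \<phi> z * \<psi> z * (z ^ (m + 1) * G z) * u2P $ i
         + h z * \<phi> z * \<psi> z * (z ^ m * F z) * (z ^ (m + 1) * G z) * eP $ i"
          using xzP[of \<phi> z \<psi> h i] fe[OF z] ge[OF z] by simp
      qed
      show "\<forall>z\<in>ball 0 \<rho> - {0}. h z * \<phi> z * \<psi> z = - 1 / 2 * xz \<phi> \<psi> h z $ 3 + 1 / 2 * xz \<phi> \<psi> h z $ 4"
        by (simp add: xz_def field_simps)
      show "((\<lambda>z. z ^ (m + 2) *s xz \<phi> \<psi> h z) \<longlongrightarrow> L) (at 0)" by (rule L(2))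
      show "L \<noteq> 0" by (rule L(1))
      show "\<forall>i. residue (\<lambda>z. xz \<phi> \<psi> h z $ i) 0 = 0" by (rule flux)
      show "\<forall>a b c. a *s cvec vP + b *s u1P + c *s u2P = 0 \<longrightarrow> a = 0 \<and> b = 0 \<and> c = 0"
        by (rule indepP)
    qed
    show ?thesis
      by (rule conclude[OF core_res isoP LIP orthP]) 
  next
    case V
    have vm1: "value_mult \<phi> c = enat m" using V(3) mm by simp
    obtain \<rho>1 F where \<rho>1: "\<rho>1 > 0" "\<rho>1 \<le> r" "F holomorphic_on ball 0 \<rho>1" "F 0 \<noteq> 0"
      "\<forall>w\<in>ball 0 \<rho>1 - {0}. \<phi> w = c + w^m * F w"
      using expand_value[OF r hol(1) V(1) vm1] by blast
    obtain \<rho>2 G where \<rho>2: "\<rho>2 > 0" "\<rho>2 \<le> r" "G holomorphic_on ball 0 \<rho>2"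
      "\<forall>w\<in>ball 0 \<rho>2 - {0}. \<psi> w = cnj c + w^(m+1) * G w"
    proof (cases "n' = \<infinity>")
      case True
      then have "\<forall>\<^sub>F z in at 0. \<psi> z = cnj c"
        using V(4) unfolding value_mult_def by (auto split: if_splits)
      then obtain \<delta> where \<delta>: "\<delta> > 0" "\<forall>x. x \<noteq> 0 \<and> dist x 0 < \<delta> \<longrightarrow> \<psi> x = cnj c"
        unfolding eventually_at by blast
      show ?thesis
      proof (rule that[of "min \<delta> r" "\<lambda>_. 0"])
        show "min \<delta> r > 0" using \<delta>(1) r by simp
        show "min \<delta> r \<le> r" by simp
        show "(\<lambda>_. 0) holomorphic_on ball 0 (min \<delta> r)" by (rule holomorphic_on_const)
        show "\<forall>w\<in>ball 0 (min \<delta> r) - {0}. \<psi> w = cnj c + w ^ (m + 1) * 0"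
          using \<delta>(2) by (auto simp: dist_norm)
      qed
    next
      case False
      then obtain n where nn: "n' = enat n" by (cases n') auto
      have mn: "m < n" using mlt mm nn by simp
      have vm2: "value_mult \<psi> (cnj c) = enat n" using V(4) nn by simp
      obtain \<rho>2 G0 where \<rho>2: "\<rho>2 > 0" "\<rho>2 \<le> r" "G0 holomorphic_on ball 0 \<rho>2"
        "\<forall>w\<in>ball 0 \<rho>2 - {0}. \<psi> w = cnj c + w^n * G0 w"
        using expand_value[OF r hol(2) V(2) vm2] by blast
      show ?thesis
      proof (rule that[of \<rho>2 "\<lambda>w. w^(n-m-1) * G0 w"])
        show "\<rho>2 > 0" "\<rho>2 \<le> r" by (fact \<rho>2(1), fact \<rho>2(2))
        show "(\<lambda>w. w^(n-m-1) * G0 w) holomorphic_on ball 0 \<rho>2"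
          by (intro holomorphic_intros \<rho>2(3))
        have nn2: "n = (m+1) + (n-m-1)" using mn by simp
        have pw: "w^n = w^(m+1) * w^(n-m-1)" for w :: complex by (metis nn2 power_add)
        show "\<forall>w\<in>ball 0 \<rho>2 - {0}. \<psi> w = cnj c + w ^ (m + 1) * (w^(n-m-1) * G0 w)"
          using \<rho>2(4) pw by (simp add: mult.assoc)
      qed
    qed
    define \<rho> where "\<rho> = min \<rho>1 \<rho>2"
    have \<rho>: "\<rho> > 0" "\<rho> \<le> r" using \<rho>1 \<rho>2 by (auto simp: \<rho>_def)
    have bs1: "ball 0 \<rho> \<subseteq> ball (0::complex) \<rho>1" and bs2: "ball 0 \<rho> \<subseteq> ball (0::complex) \<rho>2"
      and bs: "ball 0 \<rho> \<subseteq> ball (0::complex) r" using \<rho>(2) by (auto simp: \<rho>_def)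
    have hh: "h holomorphic_on ball 0 \<rho> - {0}"
      by (rule holomorphic_on_subset[OF hol(3)]) (use bs in auto)
    have core_res: "\<exists>\<alpha> a \<beta>. \<alpha> (m+2) \<noteq> 0 \<and> \<beta> \<noteq> 0 \<and> (\<exists>B. \<forall>\<^sub>F z in at 0.
           norm (xz \<phi> \<psi> h z - (\<Sum>k=1..m. \<alpha> (k + 2) / z ^ (k + 2)) *s cvec (vF c) - (1 / z ^ 2) *s (a *s cvec (vF c) + \<beta> *s u1F c)) \<le> B)"
    proof (rule core[OF \<rho>(1) hh, where F = F and G = G
          and ?u2.0 = "u2F c" and e = eF and ?p3.0 = "1/2" and ?p4.0 = "1/2" and L = L])
      show "F holomorphic_on ball 0 \<rho>" using \<rho>1(3) bs1 by (rule holomorphic_on_subset)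
      show "G holomorphic_on ball 0 \<rho>" using \<rho>2(3) bs2 by (rule holomorphic_on_subset)
      show "F 0 \<noteq> 0" by fact
      show "1 \<le> m" by fact
      show "\<forall>z\<in>ball 0 \<rho> - {0}. \<forall>i. xz \<phi> \<psi> h z $ i = h z * cvec (vF c) $ i
         + h z * (z ^ m * F z) * u1F c $ i + h z * (z ^ (m + 1) * G z) * u2F c $ i
         + h z * (z ^ m * F z) * (z ^ (m + 1) * G z) * eF $ i"
      proof (intro ballI allI)
        fix z :: complex and i :: 4 assume z: "z \<in> ball 0 \<rho> - {0}"
        have p1: "\<phi> z = c + z^m * F z" using \<rho>1(5) z bs1 by blast
        have p2: "\<psi> z = cnj c + z^(m+1) * G z" using \<rho>2(4) z bs2 by blast
        show "xz \<phi> \<psi> h z $ i = h z * cvec (vF c) $ i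
         + h z * (z ^ m * F z) * u1F c $ i + h z * (z ^ (m + 1) * G z) * u2F c $ i
         + h z * (z ^ m * F z) * (z ^ (m + 1) * G z) * eF $ i"
          by (rule xzF[where \<phi> = \<phi> and \<psi> = \<psi> and z = z, OF p1 p2])
      qed
      show "\<forall>z\<in>ball 0 \<rho> - {0}. h z = 1 / 2 * xz \<phi> \<psi> h z $ 3 + 1 / 2 * xz \<phi> \<psi> h z $ 4"
        by (simp add: xz_def field_simps)
      show "((\<lambda>z. z ^ (m + 2) *s xz \<phi> \<psi> h z) \<longlongrightarrow> L) (at 0)" by (rule L(2))
      show "L \<noteq> 0" by (rule L(1))
      show "\<forall>i. residue (\<lambda>z. xz \<phi> \<psi> h z $ i) 0 = 0" by (rule flux)
      show "\<forall>a b d. a *s cvec (vF c) + b *s u1F c + d *s u2F c = 0 \<longrightarrow> a = 0 \<and> b = 0 \<and> d = 0"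
        by (rule indepF)
    qed
    show ?thesis
      by (rule conclude[OF core_res isoF LIF orthF])
  qed
qed


end
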